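(* Let $n\ge1$ be an integer, $I,\Lambda$ non-empty sets, $P$ a $\Lambda\times I$ matrix with entries in $\mathbb{Z}_{n}\cup\{\mathbf{0}\}$, and $S=M^{0}[\mathbb{Z}_{n};I,\Lambda;P]$. Let $A$ be a finite alphabet, $\varphi:A\to S$ any map, and $\bar\varphi:A^{+}\to S$ its unique extension to a semigroup morphism. Then for every non-zero element $s=(i,g,\lambda)\in S$, the language $s\bar\varphi^{-1}\subseteq A^{+}$ has generalised star-height at most $1$.
   Context: $\mathbb{Z}_n$ is the cyclic group of order $n$ written additively. For a group $G$, non-empty sets $I,\Lambda$ and a $\Lambda\times I$ matrix $P=(p_{\lambda i})$ with entries in $G\cup\{\mathbf{0}\}$ ($\mathbf{0}$ a new symbol), the Rees zero-matrix semigroup $M^{0}[G;I,\Lambda;P]$ is $(I\times G\times\Lambda)\cup\{\mathbf{0}\}$ with $(i,g,\lambda)(j,h,\mu)=(i,g\,p_{\lambda j}\,h,\mu)$ if $p_{\lambda j}\ne\mathbf{0}$, $=\mathbf{0}$ if $p_{\lambda j}=\mathbf{0}$, and $x\mathbf{0}=\mathbf{0}x=\mathbf{0}$. Generalised regular expressions over $A$: $\emptyset$, $\varepsilon$ and each letter are expressions; if $E,F$ are expressions so are $E\cup F$, $EF$, $E^{\ast}$, $E^{c}$ (complement in $A^{\ast}$). Star-height: $h(\emptyset)=h(\varepsilon)=h(a)=0$, $h(E\cup F)=h(EF)=\max\{h(E),h(F)\}$, $h(E^{\ast})=h(E)+1$, $h(E^{c})=h(E)$; the star-height of a language is the minimum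 of $h(E)$ over expressions $E$ representing it. *)

theory Defs
  imports Main
begin

text \<open>Z_n is represented by {0..<n} with addition mod n.
 Elements of M0[Z_n; I, Lambda; P] are represented as 'i \<times> nat \<times> 'l option:
 None is the zero, Some (i, g, l) is the triple (i, g, l).
 The sandwich matrix P is a function 'l \<Rightarrow> 'i \<Rightarrow> nat option, None being the symbol 0.\<close>

type_synonym ('i, 'l) rees_elt = "('i \<times> nat \<times> 'l) option"

definition rees_carrier :: "nat \<Rightarrow> 'i set \<Rightarrow> 'l set \<Rightarrow> ('i, 'l) rees_elt set" where
  "rees_carrier n I L = {None} \<union> Some ` (I \<times> {0..<n} \<times> L)"

fun rees_mult :: "nat \<Rightarrow> ('l \<Rightarrow> 'i \<Rightarrow> nat option) \<Rightarrow> ('i, 'l) rees_elt \<Rightarrow> ('i, 'l) rees_elt \<Rightarrow> ('i, 'l) rees_elt" where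
  "rees_mult n P (Some (i, g, l)) (Some (j, h, m)) =
     (case P l j of None \<Rightarrow> None | Some p \<Rightarrow> Some (i, (g + p + h) mod n, m))"
| "rees_mult n P _ _ = None"

definition valid_sandwich :: "nat \<Rightarrow> 'i set \<Rightarrow> 'l set \<Rightarrow> ('l \<Rightarrow> 'i \<Rightarrow> nat option) \<Rightarrow> bool" where
  "valid_sandwich n I L P \<longleftrightarrow> (\<forall>l\<in>L. \<forall>i\<in>I. \<forall>p. P l i = Some p \<longrightarrow> p < n)"

text \<open>The extension of phi : A \<rightarrow> S to the semigroup morphism A^+ \<rightarrow> S
  (only meaningful on non-empty words).\<close>
fun phibar :: "nat \<Rightarrow> ('l \<Rightarrow> 'i \<Rightarrow> nat option) \<Rightarrow> ('a \<Rightarrow> ('i, 'l) rees_elt) \<Rightarrow> 'a list \<Rightarrow> ('i, 'l) rees_elt" where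
  "phibar n P phi [] = None"
| "phibar n P phi [a] = phi a"
| "phibar n P phi (a # b # w) = rees_mult n P (phi a) (phibar n P phi (b # w))"

definition plus_words :: "'a set \<Rightarrow> 'a list set" where
  "plus_words A = {w. w \<in> lists A \<and> w \<noteq> []}"

datatype 'a gre = Empty | Eps | Atom 'a | Union "'a gre" "'a gre" | Conc "'a gre" "'a gre"
  | Star "'a gre" | Compl "'a gre"

fun atoms :: "'a gre \<Rightarrow> 'a set" where
  "atoms Empty = {}"
| "atoms Eps = {}"
| "atoms (Atom a) = {a}"
| "atoms (Union e f) = atoms e \<union> atoms f"
| "atoms (Conc e f) = atoms e \<union> atoms f"
| "atoms (Star e) = atoms e"
| "atoms (Compl e) = atoms e"

definition conc_lang :: "'a list set \<Rightarrow> 'a list set \<Rightarrow> 'a list set" where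
  "conc_lang X Y = {u @ v | u v. u \<in> X \<and> v \<in> Y}"

inductive_set star_lang :: "'a list set \<Rightarrow> 'a list set" for X where
  star_nil: "[] \<in> star_lang X"
| star_app: "u \<in> X \<Longrightarrow> v \<in> star_lang X \<Longrightarrow> u @ v \<in> star_lang X"

text \<open>Language of an expression over alphabet A; complement is taken in A^*.\<close>
fun lang :: "'a set \<Rightarrow> 'a gre \<Rightarrow> 'a list set" where
  "lang A Empty = {}"
| "lang A Eps = {[]}"
| "lang A (Atom a) = {[a]}"
| "lang A (Union e f) = lang A e \<union> lang A f"
| "lang A (Conc e f) = conc_lang (lang A e) (lang A f)"
| "lang A (Star e) = star_lang (lang A e)"
| "lang A (Compl e) = lists A - lang A e"

fun height :: "'a gre \<Rightarrow> nat" where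
  "height Empty = 0"
| "height Eps = 0"
| "height (Atom a) = 0"
| "height (Union e f) = max (height e) (height f)"
| "height (Conc e f) = max (height e) (height f)"
| "height (Star e) = height e + 1"
| "height (Compl e) = height e"

definition gen_star_height_le :: "'a set \<Rightarrow> 'a list set \<Rightarrow> nat \<Rightarrow> bool" where
  "gen_star_height_le A L k \<longleftrightarrow>
     (\<exists>E. atoms E \<subseteq> A \<and> lang A E = L \<and> height E \<le> k)"

end

theory Submission
  imports Defs
begin


abbreviation HH :: "'a set \<Rightarrow> nat \<Rightarrow> ('a list \<Rightarrow> bool) \<Rightarrow> bool" where
  "HH A k P \<equiv> gen_star_height_le A {w \<in> lists A. P w} k"

lemma H_lists: "gen_star_height_le A (lists A) k"
  unfolding gen_star_height_le_def by (intro exI[of _ "Compl Empty"]) auto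

lemma H_empty: "gen_star_height_le A {} k"
  unfolding gen_star_height_le_def by (intro exI[of _ "Empty"]) auto

lemma H_const: "HH A k (\<lambda>w. C)"
proof (cases C)
  case True
  then show ?thesis unfolding gen_star_height_le_def
    by (intro exI[of _ "Compl Empty"]) auto
next
  case False
  then show ?thesis unfolding gen_star_height_le_def
    by (intro exI[of _ "Empty"]) auto
qed

lemma H_not: "HH A k P \<Longrightarrow> HH A k (\<lambda>w. \<not> P w)"
  unfolding gen_star_height_le_def
  apply (erule exE)
  subgoal for E by (rule exI[of _ "Compl E"]) auto
  done

lemma H_disj: "HH A k P \<Longrightarrow> HH A k Q \<Longrightarrow> HH A k (\<lambda>w. P w \<or> Q w)"
  unfolding gen_star_height_le_def
  apply (elim exE)
  subgoal for E F by (rule exI[of _ "Union E F"]) auto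
  done

lemma H_cong: "(\<And>w. w \<in> lists A \<Longrightarrow> P w \<longleftrightarrow> Q w) \<Longrightarrow> HH A k Q \<Longrightarrow> HH A k P"
proof -
  assume "\<And>w. w \<in> lists A \<Longrightarrow> P w \<longleftrightarrow> Q w" "HH A k Q"
  moreover have "{w \<in> lists A. P w} = {w \<in> lists A. Q w}" using calculation(1) by blast
  ultimately show ?thesis by simp
qed

lemma H_conj: "HH A k P \<Longrightarrow> HH A k Q \<Longrightarrow> HH A k (\<lambda>w. P w \<and> Q w)"
proof -
  assume "HH A k P" "HH A k Q"
  then have "HH A k (\<lambda>w. \<not> (\<not> P w \<or> \<not> Q w))" by (intro H_not H_disj)
  then show ?thesis by (rule H_cong[rotated]) simp
qed

lemma H_imp_const: "(C \<Longrightarrow> HH A k R) \<Longrightarrow> HH A k (\<lambda>w. C \<longrightarrow> R w)"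
  by (cases C) (auto simp: H_lists)

lemma H_ex: "finite S \<Longrightarrow> (\<forall>s\<in>S. HH A k (R s)) \<Longrightarrow> HH A k (\<lambda>w. \<exists>s\<in>S. R s w)"
proof (induction S rule: finite_induct)
  case empty
  then show ?case by (simp add: H_empty)
next
  case (insert x F)
  then show ?case by (auto intro: H_cong[OF _ H_disj[where P="R x" and Q="\<lambda>w. \<exists>s\<in>F. R s w"]])
qed

lemma H_all: "finite S \<Longrightarrow> (\<forall>s\<in>S. HH A k (R s)) \<Longrightarrow> HH A k (\<lambda>w. \<forall>s\<in>S. R s w)"
proof (induction S rule: finite_induct)
  case empty
  then show ?case by (simp add: H_lists)
next
  case (insert x F)
  then show ?case by (auto intro: H_cong[OF _ H_conj[where P="R x" and Q="\<lambda>w. \<forall>s\<in>F. R s w"]])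
qed

primrec word :: "'a list \<Rightarrow> 'a gre" where
  "word [] = Eps"
| "word (a # m) = Conc (Atom a) (word m)"

lemma word_props: "lang A (word m) = {m}" "height (word m) = 0" "atoms (word m) = set m"
  by (induction m) (auto simp: conc_lang_def)

fun occ :: "'a list \<Rightarrow> 'a list \<Rightarrow> nat" where
  "occ m [] = 0"
| "occ m (x # xs) = (if take (length m) (x # xs) = m then 1 else 0) + occ m xs"

lemma occ1: "occ [a] (x # xs) = (if x = a then 1 else 0) + occ [a] xs" by simp
lemma occ2: "occ [a,b] (x # xs) = (if x = a \<and> xs \<noteq> [] \<and> hd xs = b then 1 else 0) + occ [a,b] xs"
  by (cases xs) auto

lemma occ_append_pos: "m \<noteq> [] \<Longrightarrow> occ m (u @ m @ v) > 0"
  by (induction u) (cases m, auto)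

lemma occ_decomp: "occ m w > 0 \<Longrightarrow> \<exists>u v. w = u @ m @ v \<and> occ m u = 0"
proof (induction w)
  case Nil
  then show ?case by simp
next
  case (Cons x xs)
  show ?case
  proof (cases "take (length m) (x # xs) = m")
    case True
    have "x # xs = [] @ m @ drop (length m) (x # xs)"
      using append_take_drop_id[of "length m" "x # xs"] True by simp
    then show ?thesis
      by (intro exI[of _ "[]"] exI[of _ "drop (length m) (x # xs)"]) simp
  next
    case False
    then have "occ m xs > 0" using Cons.prems by simp
    then obtain u v where uv: "xs = u @ m @ v" "occ m u = 0" using Cons.IH by blast
    have "take (length m) (x # u) \<noteq> m"
    proof
      assume h: "take (length m) (x # u) = m"
      have "length (take (length m) (x # u)) = length m" using h by (rule arg_cong)
      then have "min (length m) (length (x # u)) = length m" by (simp only: length_take)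
      then have "length m \<le> length (x # u)" by (simp only: min_def split: if_splits)
      then have "take (length m) ((x # u) @ (m @ v)) = take (length m) (x # u)"
        by (subst take_append) simp
      then have "take (length m) (x # xs) = take (length m) (x # u)"
        using uv by simp
      with h False show False by simp
    qed
    then show ?thesis using uv by (intro exI[of _ "x # u"] exI[of _ v]) simp
  qed
qed

definition ec :: "'a list \<Rightarrow> 'a gre" where
  "ec m = Compl (Conc (Compl Empty) (Conc (word m) (Compl Empty)))"

lemma ec_props: "height (ec m) = 0" "atoms (ec m) = set m"
  by (auto simp: ec_def word_props)

lemma lang_ec: assumes "m \<noteq> []" "set m \<subseteq> A"
  shows "lang A (ec m) = {w \<in> lists A. occ m w = 0}"
proof -
  have "w \<in> conc_lang (lists A) (conc_lang {m} (lists A)) \<longleftrightarrow> w \<in> lists A \<and> (\<exists>x y. w = x @ m @ y)" for w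
  proof
    assume "w \<in> lists A \<and> (\<exists>x y. w = x @ m @ y)"
    then obtain x y where "w = x @ m @ y" "w \<in> lists A" by blast
    then show "w \<in> conc_lang (lists A) (conc_lang {m} (lists A))"
      unfolding conc_lang_def by auto
  qed (use assms(2) in \<open>auto simp: conc_lang_def\<close>)
  moreover have "occ m w = 0 \<longleftrightarrow> \<not> (\<exists>x y. w = x @ m @ y)" for w
    using occ_append_pos[OF assms(1)] occ_decomp[of m w] by (metis gr0I less_irrefl)
  ultimately show ?thesis unfolding ec_def by (auto simp: word_props)
qed

lemma H_occ0: "m \<noteq> [] \<Longrightarrow> set m \<subseteq> A \<Longrightarrow> HH A k (\<lambda>w. occ m w = 0)"
  unfolding gen_star_height_le_def
  by (intro exI[of _ "ec m"]) (simp add: lang_ec ec_props)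



fun pw :: "'a list \<Rightarrow> nat \<Rightarrow> 'a gre" where
  "pw m 0 = Eps"
| "pw m (Suc k) = Conc (Conc (ec m) (word m)) (pw m k)"

lemma pw_props: "height (pw m k) = 0" "atoms (pw m k) \<subseteq> set m"
  by (induction k) (auto simp: ec_props word_props)

lemma conc_mem: "w \<in> conc_lang X Y \<longleftrightarrow> (\<exists>u v. w = u @ v \<and> u \<in> X \<and> v \<in> Y)"
  by (auto simp: conc_lang_def)

locale cnt =
  fixes A :: "'a set" and m :: "'a list"
  assumes m_ne: "m \<noteq> []" and m_A: "set m \<subseteq> A"
    and addit: "\<And>u v. occ m (u @ m @ v) = occ m u + 1 + occ m v"
begin

lemma pw_lang: "v \<in> lang A (pw m k) \<Longrightarrow> v \<in> lists A \<and> (\<forall>z. occ m (v @ z) = k + occ m z)"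
proof (induction k arbitrary: v)
  case 0
  then show ?case by simp
next
  case (Suc k)
  have "v \<in> conc_lang (conc_lang (lang A (ec m)) (lang A (word m))) (lang A (pw m k))"
    using Suc.prems by (simp only: pw.simps lang.simps)
  then obtain x v' where xv: "v = x @ v'" "x \<in> conc_lang (lang A (ec m)) (lang A (word m))" "v' \<in> lang A (pw m k)"
    by (meson conc_mem)
  then obtain u where "x = u @ m" "u \<in> lang A (ec m)" by (auto simp: conc_mem word_props)
  then have uv: "v = (u @ m) @ v'" "u \<in> lists A" "occ m u = 0" "v' \<in> lang A (pw m k)"
    using xv by (auto simp: lang_ec[OF m_ne m_A])
  from Suc.IH[OF uv(4)] have "v' \<in> lists A" "\<forall>z. occ m (v' @ z) = k + occ m z" by auto
  then show ?case using uv m_A addit[of u "v' @ _"] by auto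
qed

lemma pw_decomp: "w \<in> lists A \<Longrightarrow> k \<le> occ m w \<Longrightarrow>
   \<exists>v z. w = v @ z \<and> v \<in> lang A (pw m k) \<and> z \<in> lists A \<and> occ m z = occ m w - k"
proof (induction k arbitrary: w)
  case 0
  then show ?case by (intro exI[of _ "[]"] exI[of _ w]) simp
next
  case (Suc k)
  then have "occ m w > 0" by simp
  then obtain u w' where uw: "w = u @ m @ w'" "occ m u = 0" using occ_decomp by blast
  have o: "occ m w = 1 + occ m w'" using uw addit by simp
  have wA: "w' \<in> lists A" "u \<in> lists A" using uw Suc.prems by auto
  obtain v z where vz: "w' = v @ z" "v \<in> lang A (pw m k)" "z \<in> lists A" "occ m z = occ m w' - k"
    using Suc.IH[OF wA(1)] Suc.prems o by auto
  have "u @ m \<in> conc_lang (lang A (ec m)) (lang A (word m))"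
    using uw wA by (auto simp: conc_mem lang_ec[OF m_ne m_A] word_props)
  then have "(u @ m) @ v \<in> lang A (pw m (Suc k))"
    using vz by (auto simp only: lang.simps pw.simps conc_mem)
  then show ?case using vz uw o by (intro exI[of _ "(u @ m) @ v"] exI[of _ z]) auto
qed

lemma star_pw: "s \<in> star_lang (lang A (pw m n)) \<Longrightarrow> s \<in> lists A \<and> (\<exists>j. \<forall>z. occ m (s @ z) = n * j + occ m z)"
proof (induction rule: star_lang.induct)
  case star_nil
  then show ?case by (intro conjI exI[of _ 0]) auto
next
  case (star_app u v)
  then obtain j where j: "\<forall>z. occ m (v @ z) = n * j + occ m z" by blast
  have "\<forall>z. occ m ((u @ v) @ z) = n * Suc j + occ m z"
    using pw_lang[OF star_app(1)] j by simp
  then show ?case using pw_lang[OF star_app(1)] star_app by (intro conjI exI[of _ "Suc j"]) auto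
qed

lemma count: assumes "n \<ge> 1" shows "HH A 1 (\<lambda>w. occ m w mod n = r)"
proof (cases "r < n")
  case False
  have "\<forall>w. occ m w mod n \<noteq> r" using False assms by (metis less_le_trans mod_less_divisor not_le zero_less_one)
  then show ?thesis by (simp add: H_empty)
next
  case True
  define E where "E = Conc (Star (pw m n)) (Conc (pw m r) (ec m))"
  have at: "atoms E \<subseteq> A" using pw_props(2)[of m n] pw_props(2)[of m r] m_A by (auto simp: E_def ec_props)
  have ht: "height E \<le> 1" by (simp add: E_def pw_props ec_props)
  have "lang A E = {w \<in> lists A. occ m w mod n = r}"
  proof (rule set_eqI, rule iffI)
    fix w assume "w \<in> lang A E"
    then obtain s v c where w: "w = s @ v @ c" "s \<in> star_lang (lang A (pw m n))"
       "v \<in> lang A (pw m r)" "c \<in> lists A" "occ m c = 0"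
      by (auto simp: E_def conc_lang_def lang_ec[OF m_ne m_A])
    obtain j where j: "\<forall>z. occ m (s @ z) = n * j + occ m z" "s \<in> lists A" using star_pw[OF w(2)] by blast
    have "occ m w = n * j + r" using j pw_lang[OF w(3)] w by simp
    then show "w \<in> {w \<in> lists A. occ m w mod n = r}" using True j pw_lang[OF w(3)] w by simp
  next
    fix w assume w: "w \<in> {w \<in> lists A. occ m w mod n = r}"
    have "\<forall>w. w \<in> lists A \<longrightarrow> occ m w = n * j + r \<longrightarrow> w \<in> lang A E" for j
    proof (induction j)
      case 0
      show ?case
      proof (intro allI impI)
        fix w assume h: "w \<in> lists A" "occ m w = n * 0 + r"
        have "r \<le> occ m w" using h by simp
        then obtain v z where vz: "w = v @ z" "v \<in> lang A (pw m r)" "z \<in> lists A" "occ m z = occ m w - r"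
          using pw_decomp[OF h(1)] by blast
        have "z \<in> lang A (ec m)" using vz h by (simp add: lang_ec[OF m_ne m_A])
        then have in1: "w \<in> conc_lang (lang A (pw m r)) (lang A (ec m))"
          unfolding conc_mem using vz by blast
        have "[] \<in> star_lang (lang A (pw m n))" by (rule star_nil)
        then have "w \<in> conc_lang (star_lang (lang A (pw m n))) (conc_lang (lang A (pw m r)) (lang A (ec m)))"
          using in1 unfolding conc_mem[of w "star_lang _"] by force
        then show "w \<in> lang A E" unfolding E_def lang.simps(5) lang.simps(6) .
      qed
    next
      case (Suc j)
      show ?case
      proof (intro allI impI)
        fix w assume h: "w \<in> lists A" "occ m w = n * Suc j + r"
        have "n \<le> occ m w" using h by simp
        then obtain v z where vz: "w = v @ z" "v \<in> lang A (pw m n)" "z \<in> lists A" "occ m z = occ m w - n"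
          using pw_decomp[OF h(1)] by blast
        then have "z \<in> lang A E" using Suc.IH h by auto
        then obtain s t where st: "z = s @ t" "s \<in> star_lang (lang A (pw m n))" "t \<in> lang A (Conc (pw m r) (ec m))"
          by (auto simp: E_def conc_lang_def)
        have "v @ s \<in> star_lang (lang A (pw m n))" using vz(2) st(2) by (rule star_app)
        have "w \<in> conc_lang (star_lang (lang A (pw m n))) (conc_lang (lang A (pw m r)) (lang A (ec m)))"
          unfolding conc_mem[of w] using st vz \<open>v @ s \<in> star_lang (lang A (pw m n))\<close>
          by (intro exI[of _ "v @ s"] exI[of _ t]) auto
        then show "w \<in> lang A E" unfolding E_def lang.simps(5) lang.simps(6) .
      qed
    qed
    moreover have "occ m w = n * (occ m w div n) + r"
    proof -
      have e: "occ m w mod n = r" using w by simp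
      show ?thesis by (metis e mult_div_mod_eq)
    qed
    ultimately show "w \<in> lang A E" using w by blast
  qed
  then show ?thesis unfolding gen_star_height_le_def using at ht by blast
qed

end



definition good :: "'a set \<Rightarrow> nat \<Rightarrow> ('a list \<Rightarrow> nat) \<Rightarrow> bool" where
  "good A n f \<longleftrightarrow> (\<forall>r. HH A 1 (\<lambda>w. f w mod n = r))"

lemma good_const: "good A n (\<lambda>w. c)"
  unfolding good_def by (blast intro: H_const)

lemma good_add: assumes "n \<ge> 1" "good A n f" "good A n g" shows "good A n (\<lambda>w. f w + g w)"
  unfolding good_def
proof
  fix r
  have c: "HH A 1 (\<lambda>w. (f w mod n = r1 \<and> g w mod n = r2) \<and> (r1 + r2) mod n = r)" for r1 r2
  proof -
    have a: "HH A 1 (\<lambda>w. f w mod n = r1)" using assms(2) unfolding good_def by blast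
    have b: "HH A 1 (\<lambda>w. g w mod n = r2)" using assms(3) unfolding good_def by blast
    show ?thesis by (rule H_conj[OF H_conj[OF a b] H_const])
  qed
  have "HH A 1 (\<lambda>w. \<exists>r1\<in>{..<n}. \<exists>r2\<in>{..<n}. (f w mod n = r1 \<and> g w mod n = r2) \<and> (r1 + r2) mod n = r)"
    by (rule H_ex, simp, rule ballI, rule H_ex, simp, rule ballI, rule c)
  moreover have "(f w + g w) mod n = r \<longleftrightarrow>
     (\<exists>r1\<in>{..<n}. \<exists>r2\<in>{..<n}. (f w mod n = r1 \<and> g w mod n = r2) \<and> (r1 + r2) mod n = r)" for w
  proof
    assume "(f w + g w) mod n = r"
    then show "\<exists>r1\<in>{..<n}. \<exists>r2\<in>{..<n}. (f w mod n = r1 \<and> g w mod n = r2) \<and> (r1 + r2) mod n = r"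
    proof -
      have e: "(f w mod n + g w mod n) mod n = r" using \<open>(f w + g w) mod n = r\<close> by (simp only: mod_add_eq)
      have m: "f w mod n \<in> {..<n}" "g w mod n \<in> {..<n}" using assms(1) by simp_all
      show ?thesis using e m by blast
    qed
  next
    assume "\<exists>r1\<in>{..<n}. \<exists>r2\<in>{..<n}. (f w mod n = r1 \<and> g w mod n = r2) \<and> (r1 + r2) mod n = r"
    then obtain r1 r2 where h: "f w mod n = r1" "g w mod n = r2" "(r1 + r2) mod n = r" by blast
    then show "(f w + g w) mod n = r" by (metis mod_add_eq)
  qed
  ultimately show "HH A 1 (\<lambda>w. (f w + g w) mod n = r)" by (rule H_cong[rotated])
qed

lemma good_mult: assumes "n \<ge> 1" "good A n f" shows "good A n (\<lambda>w. c * f w)"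
proof (induction c)
  case 0
  then show ?case using good_const[of A n 0] by simp
next
  case (Suc c)
  then show ?case using good_add[OF assms(1) assms(2) Suc] by (simp add: add.commute)
qed

lemma good_sum: assumes "n \<ge> 1" shows "finite S \<Longrightarrow> \<forall>s\<in>S. good A n (f s) \<Longrightarrow> good A n (\<lambda>w. \<Sum>s\<in>S. f s w)"
proof (induction S rule: finite_induct)
  case empty
  then show ?case using good_const[of A n 0] by simp
next
  case (insert x F)
  then show ?case using good_add[OF assms, of A "f x" "\<lambda>w. \<Sum>s\<in>F. f s w"] by simp
qed

lemma good_cong: "good A n g \<Longrightarrow> (\<And>w. w \<in> lists A \<Longrightarrow> f w mod n = g w mod n) \<Longrightarrow> good A n f"
  unfolding good_def
proof
  fix r assume g: "\<forall>r. HH A 1 (\<lambda>w. g w mod n = r)" and fg: "\<And>w. w \<in> lists A \<Longrightarrow> f w mod n = g w mod n"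
  have "HH A 1 (\<lambda>w. g w mod n = r)" using g by blast
  then show "HH A 1 (\<lambda>w. f w mod n = r)" by (rule H_cong[rotated]) (simp add: fg)
qed

lemma good_ind: assumes "HH A 1 P" shows "good A n (\<lambda>w. if P w then 1 else 0)"
  unfolding good_def
proof
  fix r
  have "HH A 1 (\<lambda>w. (P w \<and> 1 mod n = r) \<or> (\<not> P w \<and> 0 mod n = r))"
    by (rule H_disj[OF H_conj[OF assms H_const] H_conj[OF H_not[OF assms] H_const]])
  then show "HH A 1 (\<lambda>w. (if P w then 1 else 0) mod n = r)"
    apply (rule H_cong[rotated])
    subgoal for w by (cases "P w") simp_all
    done
qed

lemma occ1_addit: "occ [a] (u @ [a] @ v) = occ [a] u + 1 + occ [a] v"
  by (induction u) auto

lemma occ2_addit: "a \<noteq> b \<Longrightarrow> occ [a,b] (u @ [a,b] @ v) = occ [a,b] u + 1 + occ [a,b] v"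
proof (induction u)
  case Nil
  have "occ [a,b] ([a,b] @ v) = 1 + occ [a,b] (b # v)" by (simp only: append_Cons append_Nil occ2) simp
  also have "occ [a,b] (b # v) = occ [a,b] v" using Nil by (simp only: occ2) simp
  finally show ?case by simp
next
  case (Cons x u)
  have e: "(x = a \<and> u @ [a,b] @ v \<noteq> [] \<and> hd (u @ [a,b] @ v) = b) \<longleftrightarrow> (x = a \<and> u \<noteq> [] \<and> hd u = b)"
    using Cons.prems by (cases u) auto
  have "occ [a,b] ((x # u) @ [a,b] @ v) = occ [a,b] (x # (u @ [a,b] @ v))" by simp
  also have "\<dots> = (if x = a \<and> u @ [a,b] @ v \<noteq> [] \<and> hd (u @ [a,b] @ v) = b then 1 else 0) + occ [a,b] (u @ [a,b] @ v)"
    by (rule occ2)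
  also have "\<dots> = (if x = a \<and> u \<noteq> [] \<and> hd u = b then 1 else 0) + (occ [a,b] u + 1 + occ [a,b] v)"
    using e Cons.IH[OF Cons.prems] by presburger
  also have "\<dots> = occ [a,b] (x # u) + 1 + occ [a,b] v" by (simp only: occ2)
  finally show ?case .
qed

lemma good_occ1: "n \<ge> 1 \<Longrightarrow> a \<in> A \<Longrightarrow> good A n (occ [a])"
proof -
  assume n: "n \<ge> 1" and a: "a \<in> A"
  interpret cnt A "[a]" using a by unfold_locales (simp_all only: occ1_addit, simp_all)
  show ?thesis unfolding good_def using count[OF n] by blast
qed

lemma good_occ2_ne: "n \<ge> 1 \<Longrightarrow> a \<in> A \<Longrightarrow> b \<in> A \<Longrightarrow> a \<noteq> b \<Longrightarrow> good A n (occ [a,b])"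
proof -
  assume n: "n \<ge> 1" and a: "a \<in> A" "b \<in> A" "a \<noteq> b"
  have "cnt A [a,b]" unfolding cnt_def using a by (simp add: occ2_addit[OF a(3), simplified])
  then interpret cnt A "[a,b]" .
  show ?thesis unfolding good_def using count[OF n] by blast
qed

lemma occ_sum: assumes "finite A" shows
  "w \<in> lists A \<Longrightarrow> occ [a] w = (\<Sum>b\<in>A. occ [a,b] w) + (if w \<noteq> [] \<and> last w = a then 1 else 0)"
proof (induction w)
  case Nil
  then show ?case by simp
next
  case (Cons y w)
  have s: "(\<Sum>b\<in>A. occ [a,b] (y # w)) = (if y = a \<and> w \<noteq> [] then 1 else 0) + (\<Sum>b\<in>A. occ [a,b] w)"
  proof -
    have "(\<Sum>b\<in>A. occ [a,b] (y # w)) = (\<Sum>b\<in>A. (if y = a \<and> w \<noteq> [] \<and> hd w = b then 1 else 0)) + (\<Sum>b\<in>A. occ [a,b] w)"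
      unfolding sum.distrib[symmetric] by (rule sum.cong, rule refl, rule occ2)
    moreover have "(\<Sum>b\<in>A. (if y = a \<and> w \<noteq> [] \<and> hd w = b then 1 else 0)) = (if y = a \<and> w \<noteq> [] then (1::nat) else 0)"
      using Cons.prems assms by (cases w) (auto simp: sum.delta)
    ultimately show ?thesis by simp
  qed
  have w: "w \<in> lists A" using Cons.prems by simp
  show ?case
  proof (cases "w = []")
    case True
    then show ?thesis by simp
  next
    case False
    have IH: "occ [a] w = (\<Sum>b\<in>A. occ [a,b] w) + (if w \<noteq> [] \<and> last w = a then 1 else 0)"
      using Cons.IH[OF w] .
    have o: "occ [a] (y # w) = (if y = a then 1 else 0) + occ [a] w" by (rule occ1)
    have l: "last (y # w) = last w" using False by simp
    show ?thesis unfolding o s l IH using False by simp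
  qed
qed

lemma H_last: assumes "a \<in> A" shows "HH A k (\<lambda>w. w \<noteq> [] \<and> last w = a)"
proof -
  have "lang A (Conc (Compl Empty) (Atom a)) = {w \<in> lists A. w \<noteq> [] \<and> last w = a}"
  proof (rule set_eqI, rule iffI)
    fix w assume "w \<in> lang A (Conc (Compl Empty) (Atom a))"
    then show "w \<in> {w \<in> lists A. w \<noteq> [] \<and> last w = a}" using assms by (auto simp: conc_mem)
  next
    fix w assume h: "w \<in> {w \<in> lists A. w \<noteq> [] \<and> last w = a}"
    then have "w = butlast w @ [a]" using append_butlast_last_id[of w] by simp
    moreover have "butlast w \<in> lists A" using h by (auto dest: in_set_butlastD)
    ultimately show "w \<in> lang A (Conc (Compl Empty) (Atom a))"
      unfolding lang.simps conc_mem by blast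
  qed
  then show ?thesis unfolding gen_star_height_le_def using assms
    by (intro exI[of _ "Conc (Compl Empty) (Atom a)"]) auto
qed

lemma H_hd: assumes "a \<in> A" shows "HH A k (\<lambda>w. w \<noteq> [] \<and> hd w = a)"
proof -
  have "lang A (Conc (Atom a) (Compl Empty)) = {w \<in> lists A. w \<noteq> [] \<and> hd w = a}"
  proof (rule set_eqI, rule iffI)
    fix w assume "w \<in> lang A (Conc (Atom a) (Compl Empty))"
    then show "w \<in> {w \<in> lists A. w \<noteq> [] \<and> hd w = a}" using assms by (auto simp: conc_mem)
  next
    fix w assume h: "w \<in> {w \<in> lists A. w \<noteq> [] \<and> hd w = a}"
    then have "w = [a] @ tl w" by (cases w) auto
    moreover have "tl w \<in> lists A" using h by (cases w) auto
    ultimately show "w \<in> lang A (Conc (Atom a) (Compl Empty))"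
      unfolding lang.simps conc_mem by blast
  qed
  then show ?thesis unfolding gen_star_height_le_def using assms
    by (intro exI[of _ "Conc (Atom a) (Compl Empty)"]) auto
qed

lemma good_occ2: assumes "n \<ge> 1" "finite A" "a \<in> A" "b \<in> A" shows "good A n (occ [a,b])"
proof (cases "a = b")
  case False
  then show ?thesis by (rule good_occ2_ne[OF assms(1,3,4)])
next
  case True
  define R where "R w = (\<Sum>c\<in>A - {a}. occ [a,c] w) + (if w \<noteq> [] \<and> last w = a then 1 else 0)" for w
  have g1: "good A n (\<lambda>w. \<Sum>c\<in>A-{a}. occ [a,c] w)"
  proof (rule good_sum[OF assms(1)])
    show "finite (A - {a})" using assms(2) by blast
    show "\<forall>s\<in>A - {a}. good A n (occ [a, s])"
    proof
      fix s assume "s \<in> A - {a}"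
      then show "good A n (occ [a, s])" using good_occ2_ne[OF assms(1,3)] by blast
    qed
  qed
  have g2: "good A n (\<lambda>w. if w \<noteq> [] \<and> last w = a then 1 else 0)" by (rule good_ind[OF H_last[OF assms(3)]])
  have gR: "good A n R" unfolding R_def by (rule good_add[OF assms(1) g1 g2])
  have g: "good A n (\<lambda>w. occ [a] w + (n - 1) * R w)"
    by (rule good_add[OF assms(1) good_occ1[OF assms(1,3)] good_mult[OF assms(1) gR]])
  show ?thesis
  proof (rule good_cong[OF g])
    fix w assume w: "w \<in> lists A"
    have s1: "occ [a] w = (\<Sum>c\<in>A. occ [a,c] w) + (if w \<noteq> [] \<and> last w = a then 1 else 0)"
      by (rule occ_sum[OF assms(2) w])
    have s2: "(\<Sum>c\<in>A. occ [a,c] w) = occ [a,a] w + (\<Sum>c\<in>A - {a}. occ [a,c] w)"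
      by (rule sum.remove[OF assms(2,3)])
    have e1: "occ [a] w = occ [a,a] w + R w"
      unfolding R_def s1 s2 by (simp only: add.assoc)
    obtain k where k: "n = Suc k" using assms(1) by (cases n) auto
    have "occ [a] w + (n - 1) * R w = occ [a,a] w + n * R w"
      unfolding e1 k by simp
    then show "occ [a, b] w mod n = (occ [a] w + (n - 1) * R w) mod n" using True by simp
  qed
qed



definition rw :: "('a \<Rightarrow> ('i,'l) rees_elt) \<Rightarrow> 'a \<Rightarrow> 'i" where "rw phi a = fst (the (phi a))"
definition xw :: "('a \<Rightarrow> ('i,'l) rees_elt) \<Rightarrow> 'a \<Rightarrow> nat" where "xw phi a = fst (snd (the (phi a)))"
definition cl :: "('a \<Rightarrow> ('i,'l) rees_elt) \<Rightarrow> 'a \<Rightarrow> 'l" where "cl phi a = snd (snd (the (phi a)))"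
definition qq :: "('l \<Rightarrow> 'i \<Rightarrow> nat option) \<Rightarrow> ('a \<Rightarrow> ('i,'l) rees_elt) \<Rightarrow> 'a \<Rightarrow> 'a \<Rightarrow> nat" where
  "qq P phi a b = (case P (cl phi a) (rw phi b) of None \<Rightarrow> 0 | Some p \<Rightarrow> p)"

primrec valid :: "('l \<Rightarrow> 'i \<Rightarrow> nat option) \<Rightarrow> ('a \<Rightarrow> ('i,'l) rees_elt) \<Rightarrow> 'a list \<Rightarrow> bool" where
  "valid P phi [] = True"
| "valid P phi (y # w) = (phi y \<noteq> None \<and> (w \<noteq> [] \<longrightarrow> P (cl phi y) (rw phi (hd w)) \<noteq> None) \<and> valid P phi w)"

primrec wt :: "('l \<Rightarrow> 'i \<Rightarrow> nat option) \<Rightarrow> ('a \<Rightarrow> ('i,'l) rees_elt) \<Rightarrow> 'a list \<Rightarrow> nat" where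
  "wt P phi [] = 0"
| "wt P phi (y # w) = xw phi y + (if w = [] then 0 else qq P phi y (hd w)) + wt P phi w"

lemma phibar_eq: "(\<forall>a\<in>set w. phi a \<noteq> None \<longrightarrow> xw phi a < n) \<Longrightarrow> w \<noteq> [] \<Longrightarrow>
  phibar n P phi w = (if valid P phi w then Some (rw phi (hd w), wt P phi w mod n, cl phi (last w)) else None)"
proof (induction n P phi w rule: phibar.induct)
  case (1 n P phi)
  then show ?case by simp
next
  case (2 n P phi a)
  then show ?case by (cases "phi a") (auto simp: rw_def xw_def cl_def)
next
  case (3 n P phi a b w)
  then have IH: "phibar n P phi (b # w) = (if valid P phi (b # w) then Some (rw phi b, wt P phi (b # w) mod n, cl phi (last (b # w))) else None)"
    by simp
  show ?case
  proof (cases "phi a")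
    case None
    then show ?thesis by simp
  next
    case (Some t)
    obtain r x c where t: "t = (r, x, c)" by (cases t) auto
    show ?thesis
    proof (cases "valid P phi (b # w)")
      case False
      then have "phibar n P phi (b # w) = None" using IH by simp
      then have "phibar n P phi (a # b # w) = None" by simp
      moreover have "\<not> valid P phi (a # b # w)" using False by simp
      ultimately show ?thesis by simp
    next
      case True
      have ph: "phibar n P phi (a # b # w) = rees_mult n P (Some (r, x, c)) (Some (rw phi b, wt P phi (b # w) mod n, cl phi (last (b # w))))"
        using IH True Some t by simp
      have rxc: "rw phi a = r" "xw phi a = x" "cl phi a = c" using Some t by (simp_all add: rw_def xw_def cl_def)
      show ?thesis
      proof (cases "P c (rw phi b)")
        case None
        then show ?thesis using ph rxc by simp
      next
        case (Some p)
        have q: "qq P phi a b = p" using Some rxc by (simp add: qq_def)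
        have "(x + p + wt P phi (b # w) mod n) mod n = (x + p + wt P phi (b # w)) mod n"
          by (simp add: mod_add_right_eq)
        have p1: "phibar n P phi (a # b # w) = Some (r, (x + p + wt P phi (b # w)) mod n, cl phi (last (b # w)))"
          unfolding ph using Some \<open>(x + p + wt P phi (b # w) mod n) mod n = _\<close> by simp
        have v: "valid P phi (a # b # w)" using True Some \<open>phi a = Some t\<close> rxc by simp
        have wt: "wt P phi (a # b # w) = x + p + wt P phi (b # w)" using rxc q by simp
        have h1: "rw phi (hd (a # b # w)) = r" using rxc by simp
        have h2: "last (a # b # w) = last (b # w)" by simp
        show ?thesis by (simp only: p1 wt h1 h2 if_P[OF v])
      qed
    qed
  qed
qed

lemma sum_if_eq: "finite A \<Longrightarrow> y \<in> A \<Longrightarrow> (\<Sum>a\<in>A. f a * (if y = a then 1 else 0)) = (f y :: nat)"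
proof -
  assume "finite A" "y \<in> A"
  have "(\<Sum>a\<in>A. f a * (if y = a then 1 else 0)) = (\<Sum>a\<in>A. if y = a then f a else 0)"
    by (rule sum.cong) auto
  then show ?thesis using \<open>finite A\<close> \<open>y \<in> A\<close> by (simp add: sum.delta)
qed

lemma wt_decomp: assumes "finite A" shows "w \<in> lists A \<Longrightarrow>
  wt P phi w = (\<Sum>a\<in>A. xw phi a * occ [a] w) + (\<Sum>a\<in>A. \<Sum>b\<in>A. qq P phi a b * occ [a,b] w)"
proof (induction w)
  case Nil
  then show ?case by simp
next
  case (Cons y w)
  have y: "y \<in> A" and w: "w \<in> lists A" using Cons.prems by auto
  have s1: "(\<Sum>a\<in>A. xw phi a * occ [a] (y # w)) = xw phi y + (\<Sum>a\<in>A. xw phi a * occ [a] w)"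
    by (simp only: occ1 distrib_left sum.distrib sum_if_eq[OF assms y])
  have s2: "(\<Sum>a\<in>A. \<Sum>b\<in>A. qq P phi a b * occ [a,b] (y # w)) =
     (if w = [] then 0 else qq P phi y (hd w)) + (\<Sum>a\<in>A. \<Sum>b\<in>A. qq P phi a b * occ [a,b] w)"
  proof (cases w)
    case Nil
    then show ?thesis by simp
  next
    case (Cons z w')
    then have z: "z \<in> A" using w by auto
    have "(\<Sum>a\<in>A. \<Sum>b\<in>A. qq P phi a b * occ [a,b] (y # w)) =
      (\<Sum>a\<in>A. \<Sum>b\<in>A. qq P phi a b * (if y = a then 1 else 0) * (if z = b then 1 else 0)) + (\<Sum>a\<in>A. \<Sum>b\<in>A. qq P phi a b * occ [a,b] w)"
      by (simp only: occ2 Cons sum.distrib[symmetric]) (rule sum.cong, simp, rule sum.cong, auto)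
    also have "(\<Sum>a\<in>A. \<Sum>b\<in>A. qq P phi a b * (if y = a then 1 else 0) * (if z = b then 1 else 0)) = qq P phi y z"
      by (simp only: mult.assoc[symmetric] sum_if_eq[OF assms z] sum_if_eq[OF assms y])
    finally show ?thesis using Cons by simp
  qed
  show ?case using Cons.IH[OF w] s1 s2 by simp
qed

definition vq1 :: "'a set \<Rightarrow> ('a \<Rightarrow> ('i,'l) rees_elt) \<Rightarrow> 'a list \<Rightarrow> bool" where
  "vq1 A phi w \<longleftrightarrow> (\<forall>a\<in>A. phi a = None \<longrightarrow> occ [a] w = 0)"
definition vq2 :: "'a set \<Rightarrow> ('l \<Rightarrow> 'i \<Rightarrow> nat option) \<Rightarrow> ('a \<Rightarrow> ('i,'l) rees_elt) \<Rightarrow> 'a list \<Rightarrow> bool" where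
  "vq2 A P phi w \<longleftrightarrow> (\<forall>a\<in>A. \<forall>b\<in>A. phi a \<noteq> None \<longrightarrow> phi b \<noteq> None \<longrightarrow> P (cl phi a) (rw phi b) = None \<longrightarrow> occ [a,b] w = 0)"

lemma vq1_cons: "y \<in> A \<Longrightarrow> vq1 A phi (y # w) \<longleftrightarrow> phi y \<noteq> None \<and> vq1 A phi w"
  unfolding vq1_def occ1 by auto

lemma vq2D: "vq2 A P phi w \<Longrightarrow> a \<in> A \<Longrightarrow> b \<in> A \<Longrightarrow> phi a \<noteq> None \<Longrightarrow> phi b \<noteq> None \<Longrightarrow>
   P (cl phi a) (rw phi b) = None \<Longrightarrow> occ [a,b] w = 0"
  unfolding vq2_def by blast

lemma vq2I: "(\<And>a b. a \<in> A \<Longrightarrow> b \<in> A \<Longrightarrow> phi a \<noteq> None \<Longrightarrow> phi b \<noteq> None \<Longrightarrow>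
   P (cl phi a) (rw phi b) = None \<Longrightarrow> occ [a,b] w = 0) \<Longrightarrow> vq2 A P phi w"
  unfolding vq2_def by blast

lemma vq2_cons: "y \<in> A \<Longrightarrow> w \<in> lists A \<Longrightarrow> vq2 A P phi (y # w) \<longleftrightarrow>
   (w \<noteq> [] \<longrightarrow> phi y \<noteq> None \<longrightarrow> phi (hd w) \<noteq> None \<longrightarrow> P (cl phi y) (rw phi (hd w)) \<noteq> None) \<and> vq2 A P phi w"
proof -
  assume y: "y \<in> A" and w: "w \<in> lists A"
  have hd: "w \<noteq> [] \<Longrightarrow> hd w \<in> A" using w by (cases w) auto
  show ?thesis
  proof
    assume h: "vq2 A P phi (y # w)"
    have 1: "w \<noteq> [] \<longrightarrow> phi y \<noteq> None \<longrightarrow> phi (hd w) \<noteq> None \<longrightarrow> P (cl phi y) (rw phi (hd w)) \<noteq> None"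
    proof (intro impI notI)
      assume a: "w \<noteq> []" "phi y \<noteq> None" "phi (hd w) \<noteq> None" "P (cl phi y) (rw phi (hd w)) = None"
      have "occ [y, hd w] (y # w) = 0" by (rule vq2D[OF h y hd[OF a(1)] a(2-4)])
      moreover have "occ [y, hd w] (y # w) > 0" using a(1) by (simp add: occ2 del: occ.simps(2))
      ultimately show False by simp
    qed
    have 2: "vq2 A P phi w"
    proof (rule vq2I)
      fix a b assume ab: "a \<in> A" "b \<in> A" "phi a \<noteq> None" "phi b \<noteq> None" "P (cl phi a) (rw phi b) = None"
      have "occ [a,b] (y # w) = 0" by (rule vq2D[OF h ab])
      then show "occ [a,b] w = 0" by (simp add: occ2 del: occ.simps(2))
    qed
    show "(w \<noteq> [] \<longrightarrow> phi y \<noteq> None \<longrightarrow> phi (hd w) \<noteq> None \<longrightarrow> P (cl phi y) (rw phi (hd w)) \<noteq> None) \<and> vq2 A P phi w"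
      by (rule conjI[OF 1 2])
  next
    assume h: "(w \<noteq> [] \<longrightarrow> phi y \<noteq> None \<longrightarrow> phi (hd w) \<noteq> None \<longrightarrow> P (cl phi y) (rw phi (hd w)) \<noteq> None) \<and> vq2 A P phi w"
    have h1: "w \<noteq> [] \<longrightarrow> phi y \<noteq> None \<longrightarrow> phi (hd w) \<noteq> None \<longrightarrow> P (cl phi y) (rw phi (hd w)) \<noteq> None"
      using h by (rule conjunct1)
    have h2: "vq2 A P phi w" using h by (rule conjunct2)
    show "vq2 A P phi (y # w)"
    proof (rule vq2I)
      fix a b assume ab: "a \<in> A" "b \<in> A" "phi a \<noteq> None" "phi b \<noteq> None" "P (cl phi a) (rw phi b) = None"
      have o: "occ [a,b] w = 0" by (rule vq2D[OF h2 ab])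
      have "\<not> (y = a \<and> w \<noteq> [] \<and> hd w = b)"
      proof
        assume e: "y = a \<and> w \<noteq> [] \<and> hd w = b"
        then have "P (cl phi a) (rw phi b) \<noteq> None" using h1 ab(3,4) by simp
        then show False using ab(5) by simp
      qed
      then show "occ [a,b] (y # w) = 0" using o by (simp add: occ2 del: occ.simps(2))
    qed
  qed
qed

lemma valid_hd: "valid P phi w \<Longrightarrow> w \<noteq> [] \<Longrightarrow> phi (hd w) \<noteq> None"
  by (cases w) auto

lemma valid_iff: "w \<in> lists A \<Longrightarrow> valid P phi w \<longleftrightarrow> vq1 A phi w \<and> vq2 A P phi w"
proof (induction w)
  case Nil
  then show ?case by (simp add: vq1_def vq2_def)
next
  case (Cons y w)
  have y: "y \<in> A" and w: "w \<in> lists A" using Cons.prems by auto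
  have IH: "valid P phi w \<longleftrightarrow> vq1 A phi w \<and> vq2 A P phi w" using Cons.IH[OF w] .
  show ?case
  proof
    assume v: "valid P phi (y # w)"
    have a: "phi y \<noteq> None" and b: "w \<noteq> [] \<longrightarrow> P (cl phi y) (rw phi (hd w)) \<noteq> None"
      and c: "valid P phi w" using v by simp_all
    have d: "vq1 A phi w" "vq2 A P phi w" using c IH by simp_all
    show "vq1 A phi (y # w) \<and> vq2 A P phi (y # w)"
      unfolding vq1_cons[OF y] vq2_cons[OF y w] using a b d by simp
  next
    assume q: "vq1 A phi (y # w) \<and> vq2 A P phi (y # w)"
    have a: "phi y \<noteq> None" and d1: "vq1 A phi w" using q unfolding vq1_cons[OF y] by simp_all
    have b: "w \<noteq> [] \<longrightarrow> phi y \<noteq> None \<longrightarrow> phi (hd w) \<noteq> None \<longrightarrow> P (cl phi y) (rw phi (hd w)) \<noteq> None"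
      and d2: "vq2 A P phi w" using q unfolding vq2_cons[OF y w] by simp_all
    have c: "valid P phi w" using d1 d2 IH by simp
    have e: "w \<noteq> [] \<longrightarrow> phi (hd w) \<noteq> None" using valid_hd[OF c] by simp
    show "valid P phi (y # w)" using a b c e by simp
  qed
qed



theorem lemma3p2:
  fixes n :: nat and I :: "'i set" and L :: "'l set"
    and P :: "'l \<Rightarrow> 'i \<Rightarrow> nat option"
    and A :: "'a set" and phi :: "'a \<Rightarrow> ('i, 'l) rees_elt"
  assumes "n \<ge> 1" and "I \<noteq> {}" and "L \<noteq> {}"
    and "valid_sandwich n I L P"
    and "finite A"
    and "\<forall>a\<in>A. phi a \<in> rees_carrier n I L"
    and "s \<in> rees_carrier n I L" and "s \<noteq> None"
  shows "gen_star_height_le A {w \<in> plus_words A. phibar n P phi w = s} 1"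
proof -
  obtain t where "s = Some t" using assms(8) by (cases s) auto
  obtain i g l where s: "s = Some (i, g, l)" using \<open>s = Some t\<close> by (cases t) auto
  have xb: "\<forall>a\<in>A. phi a \<noteq> None \<longrightarrow> xw phi a < n"
  proof (intro ballI impI)
    fix a assume a: "a \<in> A" "phi a \<noteq> None"
    then obtain r x c where "phi a = Some (r, x, c)" by (cases "phi a") auto
    moreover have "phi a \<in> rees_carrier n I L" using assms(6) a(1) by blast
    ultimately show "xw phi a < n" by (auto simp: rees_carrier_def xw_def)
  qed
  have g1: "good A n (\<lambda>w. \<Sum>a\<in>A. xw phi a * occ [a] w)"
  proof (rule good_sum[OF assms(1) assms(5)], rule ballI)
    fix a assume a: "a \<in> A"
    show "good A n (\<lambda>w. xw phi a * occ [a] w)" by (rule good_mult[OF assms(1) good_occ1[OF assms(1) a]])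
  qed
  have g2: "good A n (\<lambda>w. \<Sum>a\<in>A. \<Sum>b\<in>A. qq P phi a b * occ [a,b] w)"
  proof (rule good_sum[OF assms(1) assms(5)], rule ballI)
    fix a assume a: "a \<in> A"
    show "good A n (\<lambda>w. \<Sum>b\<in>A. qq P phi a b * occ [a,b] w)"
    proof (rule good_sum[OF assms(1) assms(5)], rule ballI)
      fix b assume b: "b \<in> A"
      show "good A n (\<lambda>w. qq P phi a b * occ [a,b] w)"
        by (rule good_mult[OF assms(1) good_occ2[OF assms(1,5) a b]])
    qed
  qed
  have gd: "good A n (\<lambda>w. (\<Sum>a\<in>A. xw phi a * occ [a] w) + (\<Sum>a\<in>A. \<Sum>b\<in>A. qq P phi a b * occ [a,b] w))"
    by (rule good_add[OF assms(1) g1 g2])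
  have gw: "good A n (wt P phi)"
    by (rule good_cong[OF gd]) (simp only: wt_decomp[OF assms(5)])
  have hW: "HH A 1 (\<lambda>w. wt P phi w mod n = g)" using gw unfolding good_def by blast
  have h1: "HH A 1 (\<lambda>w. \<forall>a\<in>A. phi a = None \<longrightarrow> occ [a] w = 0)"
  proof (rule H_all[OF assms(5)], rule ballI)
    fix a assume a: "a \<in> A"
    show "HH A 1 (\<lambda>w. phi a = None \<longrightarrow> occ [a] w = 0)"
      by (rule H_imp_const, rule H_occ0) (use a in simp_all)
  qed
  have hv1: "HH A 1 (vq1 A phi)" by (rule H_cong[OF _ h1]) (simp add: vq1_def)
  have h2: "HH A 1 (\<lambda>w. \<forall>a\<in>A. \<forall>b\<in>A. phi a \<noteq> None \<longrightarrow> phi b \<noteq> None \<longrightarrow> P (cl phi a) (rw phi b) = None \<longrightarrow> occ [a,b] w = 0)"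
  proof (rule H_all[OF assms(5)], rule ballI)
    fix a assume a: "a \<in> A"
    show "HH A 1 (\<lambda>w. \<forall>b\<in>A. phi a \<noteq> None \<longrightarrow> phi b \<noteq> None \<longrightarrow> P (cl phi a) (rw phi b) = None \<longrightarrow> occ [a,b] w = 0)"
    proof (rule H_all[OF assms(5)], rule ballI)
      fix b assume b: "b \<in> A"
      show "HH A 1 (\<lambda>w. phi a \<noteq> None \<longrightarrow> phi b \<noteq> None \<longrightarrow> P (cl phi a) (rw phi b) = None \<longrightarrow> occ [a,b] w = 0)"
        by (rule H_imp_const, rule H_imp_const, rule H_imp_const, rule H_occ0) (use a b in simp_all)
    qed
  qed
  have hv2: "HH A 1 (vq2 A P phi)" by (rule H_cong[OF _ h2]) (simp add: vq2_def)
  have hV: "HH A 1 (valid P phi)"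
    by (rule H_cong[OF _ H_conj[OF hv1 hv2]]) (rule valid_iff)
  have hH: "HH A 1 (\<lambda>w. \<exists>a\<in>{a\<in>A. rw phi a = i}. w \<noteq> [] \<and> hd w = a)"
  proof (rule H_ex, use assms(5) in simp, rule ballI)
    fix a assume "a \<in> {a\<in>A. rw phi a = i}"
    then show "HH A 1 (\<lambda>w. w \<noteq> [] \<and> hd w = a)" by (intro H_hd) simp
  qed
  have hL: "HH A 1 (\<lambda>w. \<exists>a\<in>{a\<in>A. cl phi a = l}. w \<noteq> [] \<and> last w = a)"
  proof (rule H_ex, use assms(5) in simp, rule ballI)
    fix a assume "a \<in> {a\<in>A. cl phi a = l}"
    then show "HH A 1 (\<lambda>w. w \<noteq> [] \<and> last w = a)" by (intro H_last) simp
  qed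
  define Pred where "Pred w \<longleftrightarrow> ((\<exists>a\<in>{a\<in>A. rw phi a = i}. w \<noteq> [] \<and> hd w = a) \<and>
     (\<exists>a\<in>{a\<in>A. cl phi a = l}. w \<noteq> [] \<and> last w = a)) \<and> (valid P phi w \<and> wt P phi w mod n = g)" for w
  have hP: "HH A 1 Pred" unfolding Pred_def
    by (rule H_conj[OF H_conj[OF hH hL] H_conj[OF hV hW]])
  have eq: "{w \<in> plus_words A. phibar n P phi w = s} = {w \<in> lists A. Pred w}"
  proof (rule set_eqI)
    fix w
    show "w \<in> {w \<in> plus_words A. phibar n P phi w = s} \<longleftrightarrow> w \<in> {w \<in> lists A. Pred w}"
    proof (cases "w \<in> lists A \<and> w \<noteq> []")
      case False
      then show ?thesis by (auto simp: plus_words_def Pred_def)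
    next
      case True
      have xb': "\<forall>a\<in>set w. phi a \<noteq> None \<longrightarrow> xw phi a < n" using xb True by auto
      have hdA: "hd w \<in> A" "last w \<in> A" using True by auto
      have pe: "phibar n P phi w = (if valid P phi w then Some (rw phi (hd w), wt P phi w mod n, cl phi (last w)) else None)"
        using phibar_eq[OF xb'] True by blast
      have "phibar n P phi w = s \<longleftrightarrow> Pred w"
      proof
        assume "phibar n P phi w = s"
        then have v: "valid P phi w" and e: "rw phi (hd w) = i" "wt P phi w mod n = g" "cl phi (last w) = l"
          unfolding pe s by (auto split: if_splits)
        show "Pred w" unfolding Pred_def using v e hdA True by blast
      next
        assume "Pred w"
        then have v: "valid P phi w" and e: "rw phi (hd w) = i" "wt P phi w mod n = g" "cl phi (last w) = l"
          unfolding Pred_def by auto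
        show "phibar n P phi w = s" unfolding pe s using v e by simp
      qed
      then show ?thesis using True by (simp add: plus_words_def)
    qed
  qed
  show ?thesis unfolding eq by (rule hP)
qed


end
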